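(* Let $(X,d_X)$ be a metric space with density character $\kappa$. Suppose there are $C\in[1,\infty)$ and $D\in[0,\infty)$ such that $\Delta_X^{(c)}(R)\leq CR+D$ for all $R\in[0,\infty)$. Then for any $\lambda>0$, any $K>2(C+\lambda)$, and any $L>\frac{(C+\lambda)D}{\lambda}$, there exists a coarse Lipschitz embedding $f\colon X\to c_0^+(\kappa)$ such that \[d_X(x,y)-L\leq \|f(x)-f(y)\|_{\infty}\leq K\,d_X(x,y)\] for every $x,y\in X$. If $D=0$, then it is possible to take $L=0$.
   Context: The density character $\mathrm{dens}(X)$ is the smallest cardinality of a dense subset of $X$. For a cardinal $\kappa$, $c_0(\kappa)$ is the space of real families $(x_\xi)_{\xi<\kappa}$ such that $\{\xi : |x_\xi|>\eta\}$ is finite for every $\eta>0$, with the sup norm, and $c_0^+(\kappa)=\{x\in c_0(\kappa): x_\xi\geq 0 \text{ for all }\xi\}$ with the metric inherited from $c_0(\kappa)$. For a family $\mathcal{U}$ of subsets covering $X$: $\mathrm{diam}(\mathcal{U})=\sup\{\mathrm{diam}(U): U\in\mathcal{U}\}$; the Lebesgue number is $\mathcal{L}(\mathcal{U})=\sup\{d\in[0,\infty): \text{every } E\subseteq X \text{ with } \mathrm{diam}(E)<d \text{ is contained in some } U\in\mathcal{U}\}$; $\mathcal{U}$ is point-finite if each $x\in X$ lies in only finitely many $U\in\mathcal{U}$. Define $\Delta_X^{(c)}\colon[0,\infty)\to[0,\infty]$ by $\Delta_X^{(c)}(R)=\inf\{\mathrm{diam}(\mathcal{U}): \mathcal{U}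 \text{ a point-finite cover of } X \text{ with } \mathcal{L}(\mathcal{U})\geq R\}$. For $f\colon X\to Y$ between metric spaces, $\omega_f(t)=\sup\{d_Y(f(x_1),f(x_2)): d_X(x_1,x_2)\leq t\}$ and $\rho_f(t)=\inf\{d_Y(f(x_1),f(x_2)): d_X(x_1,x_2)\geq t\}$; $f$ is a coarse Lipschitz embedding if there exist $A\geq 1$, $B\geq 0$ with $\omega_f(t)\leq At+B$ and $\rho_f(t)\geq \frac1A t-B$ for all $t\geq 0$. *)

theory Defs
  imports "HOL-Analysis.Analysis" "HOL-Library.Extended_Real" "HOL-Library.Extended_Nonnegative_Real"
begin

definition has_density_card :: "'a::metric_space set \<Rightarrow> 'i set \<Rightarrow> bool" where
  "has_density_card X I \<longleftrightarrow>
     (\<exists>S. S \<subseteq> X \<and> X \<subseteq> closure S \<and> ordIso2 (card_of S) (card_of I)) \<and>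
     (\<forall>S. S \<subseteq> X \<and> X \<subseteq> closure S \<longrightarrow> ordLeq2 (card_of I) (card_of S))"

definition c0 :: "('i \<Rightarrow> real) set" where
  "c0 = {x. \<forall>\<eta>>0. finite {i. \<bar>x i\<bar> > \<eta>}}"

definition c0plus :: "('i \<Rightarrow> real) set" where
  "c0plus = {x \<in> c0. \<forall>i. x i \<ge> 0}"

definition sup_dist :: "('i \<Rightarrow> real) \<Rightarrow> ('i \<Rightarrow> real) \<Rightarrow> real" where
  "sup_dist x y = (SUP i. \<bar>x i - y i\<bar>)"

definition ediam :: "'a::metric_space set \<Rightarrow> ennreal" where
  "ediam E = (SUP p \<in> E \<times> E. ennreal (dist (fst p) (snd p)))"

definition cover_diam :: "'a::metric_space set set \<Rightarrow> ennreal" where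
  "cover_diam \<U> = (SUP U \<in> \<U>. ediam U)"

definition lebesgue_number :: "'a::metric_space set \<Rightarrow> 'a set set \<Rightarrow> ennreal" where
  "lebesgue_number X \<U> = (SUP d \<in> {d::real. 0 \<le> d \<and>
       (\<forall>E. E \<subseteq> X \<and> ediam E < ennreal d \<longrightarrow> (\<exists>U\<in>\<U>. E \<subseteq> U))}. ennreal d)"

definition point_finite_cover :: "'a set \<Rightarrow> 'a set set \<Rightarrow> bool" where
  "point_finite_cover X \<U> \<longleftrightarrow> X \<subseteq> \<Union>\<U> \<and> (\<forall>x\<in>X. finite {U\<in>\<U>. x \<in> U})"

definition Delta_c :: "'a::metric_space set \<Rightarrow> real \<Rightarrow> ennreal" where
  "Delta_c X R = (INF \<U> \<in> {\<U>. point_finite_cover X \<U> \<and> lebesgue_number X \<U> \<ge> ennreal R}.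
                    cover_diam \<U>)"

definition omega_f :: "('a::metric_space \<Rightarrow> 'b) \<Rightarrow> ('b \<Rightarrow> 'b \<Rightarrow> real) \<Rightarrow> real \<Rightarrow> ereal" where
  "omega_f f dY t = (SUP p \<in> {p. dist (fst p) (snd p) \<le> t}. ereal (dY (f (fst p)) (f (snd p))))"

definition rho_f :: "('a::metric_space \<Rightarrow> 'b) \<Rightarrow> ('b \<Rightarrow> 'b \<Rightarrow> real) \<Rightarrow> real \<Rightarrow> ereal" where
  "rho_f f dY t = (INF p \<in> {p. dist (fst p) (snd p) \<ge> t}. ereal (dY (f (fst p)) (f (snd p))))"

definition coarse_lipschitz_embedding :: "('a::metric_space \<Rightarrow> 'b) \<Rightarrow> ('b \<Rightarrow> 'b \<Rightarrow> real) \<Rightarrow> bool" where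
  "coarse_lipschitz_embedding f dY \<longleftrightarrow>
     (\<exists>A B. A \<ge> 1 \<and> B \<ge> 0 \<and>
        (\<forall>t\<ge>0. omega_f f dY t \<le> ereal (A * t + B) \<and> rho_f f dY t \<ge> ereal (t / A - B)))"

end

theory Submission
  imports Defs
begin


lemma sup_dist_le:
  assumes "\<And>i. \<bar>u i - v i\<bar> \<le> B"
  shows "sup_dist u v \<le> B"
  unfolding sup_dist_def by (rule cSUP_least) (use assms in auto)

lemma sup_dist_ge:
  assumes "\<And>i. \<bar>u i - v i\<bar> \<le> B"
  shows "\<bar>u i - v i\<bar> \<le> sup_dist u v"
  unfolding sup_dist_def by (rule cSUP_upper) (use assms in \<open>auto intro!: bdd_aboveI2\<close>)

lemma sup_dist_nonneg:
  assumes "\<And>i. \<bar>u i - v i\<bar> \<le> B"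
  shows "0 \<le> sup_dist u v"
proof -
  have "\<bar>u undefined - v undefined\<bar> \<le> sup_dist u v" by (rule sup_dist_ge) (rule assms)
  thus ?thesis by linarith
qed

lemma cle_from_bounds:
  fixes f :: "'a::metric_space \<Rightarrow> 'b"
  assumes K: "K \<ge> 1" and L: "L \<ge> 0"
    and b: "\<forall>x y. dist x y - L \<le> dY (f x) (f y) \<and> dY (f x) (f y) \<le> K * dist x y"
  shows "coarse_lipschitz_embedding f dY"
proof -
  have main: "omega_f f dY t \<le> ereal (K * t + L) \<and> rho_f f dY t \<ge> ereal (t / K - L)"
    if t: "t \<ge> 0" for t
  proof
  show "omega_f f dY t \<le> ereal (K * t + L)"
    unfolding omega_f_def
  proof (rule SUP_least)
    fix p :: "'a \<times> 'a" assume "p \<in> {p. dist (fst p) (snd p) \<le> t}"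
    hence "dist (fst p) (snd p) \<le> t" by auto
    hence "dY (f (fst p)) (f (snd p)) \<le> K * t + L"
      using b[rule_format, of "fst p" "snd p"] K L
      by (smt (verit, best) mult_left_mono)
    thus "ereal (dY (f (fst p)) (f (snd p))) \<le> ereal (K * t + L)" by simp
  qed
  show "rho_f f dY t \<ge> ereal (t / K - L)"
    unfolding rho_f_def
  proof (rule INF_greatest)
    fix p :: "'a \<times> 'a" assume "p \<in> {p. dist (fst p) (snd p) \<ge> t}"
    hence d: "dist (fst p) (snd p) \<ge> t" by auto
    have "t / K \<le> t" using K t by (simp add: divide_le_eq mult_le_cancel_left1 le_divide_eq)
    hence "t / K - L \<le> dY (f (fst p)) (f (snd p))"
      using b[rule_format, of "fst p" "snd p"] d by linarith
    thus "ereal (t / K - L) \<le> ereal (dY (f (fst p)) (f (snd p)))" by simp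
  qed
  qed
  show ?thesis unfolding coarse_lipschitz_embedding_def
    by (rule exI[of _ K], rule exI[of _ L]) (simp add: main K L)
qed

lemma min_lip: "\<bar>min (a::real) b - min c d\<bar> \<le> max \<bar>a - c\<bar> \<bar>b - d\<bar>"
  unfolding min_def max_def by (auto split: if_splits)

lemma infdist_ge_ball:
  fixes s :: "'a::metric_space"
  assumes "ball s r \<subseteq> U" "U \<noteq> UNIV"
  shows "infdist x (-U) \<ge> r - dist s x"
proof -
  have ne: "-U \<noteq> {}" using assms by auto
  show ?thesis unfolding infdist_notempty[OF ne]
  proof (rule cINF_greatest[OF ne])
    fix w assume "w \<in> -U"
    hence "dist s w \<ge> r" using assms(1) by (force simp: subset_iff not_le)
    thus "r - dist s x \<le> dist x w" using dist_triangle[of s w x] by (simp add: dist_commute)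
  qed
qed



lemma cover_exists:
  fixes C D R lam :: real
  assumes Delta: "\<forall>R\<ge>0. Delta_c (UNIV :: 'a::metric_space set) R \<le> ennreal (C * R + D)"
    and C: "C \<ge> 0" and D: "D \<ge> 0" and R: "R > 0" and lam: "lam > 0"
  shows "\<exists>\<U>::'a set set. point_finite_cover UNIV \<U> \<and> lebesgue_number UNIV \<U> \<ge> ennreal R
           \<and> cover_diam \<U> < ennreal ((C + lam) * R + D)"
proof -
  have "ennreal (C * R + D) < ennreal ((C + lam) * R + D)"
    using C D R lam by (subst ennreal_less_iff) (auto simp: algebra_simps)
  hence "Delta_c (UNIV :: 'a set) R < ennreal ((C + lam) * R + D)"
    using Delta R by (meson le_less_trans less_imp_le)
  thus ?thesis unfolding Delta_c_def INF_less_iff by auto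
qed

lemma ediam_ball_le:
  fixes s :: "'a::metric_space"
  assumes "\<rho> \<ge> 0"
  shows "ediam (ball s \<rho>) \<le> ennreal (2 * \<rho>)"
  unfolding ediam_def
proof (rule SUP_least)
  fix p assume "p \<in> ball s \<rho> \<times> ball s \<rho>"
  hence "dist s (fst p) < \<rho>" "dist s (snd p) < \<rho>" by auto
  hence "dist (fst p) (snd p) \<le> 2 * \<rho>" using dist_triangle[of "fst p" "snd p" s]
    by (simp add: dist_commute)
  thus "ennreal (dist (fst p) (snd p)) \<le> ennreal (2 * \<rho>)" by (rule ennreal_leI)
qed

lemma cover_ball:
  fixes \<U> :: "'a::metric_space set set"
  assumes LN: "lebesgue_number UNIV \<U> \<ge> ennreal R" and r: "0 \<le> \<rho>" "2 * \<rho> < R"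
  shows "\<exists>U\<in>\<U>. ball s \<rho> \<subseteq> U"
proof -
  have "ennreal (2 * \<rho>) < ennreal R" using r by (subst ennreal_less_iff) auto
  hence "ennreal (2 * \<rho>) < lebesgue_number UNIV \<U>" using LN by (rule less_le_trans)
  then obtain d where d: "0 \<le> d" "\<forall>E. E \<subseteq> UNIV \<and> ediam E < ennreal d \<longrightarrow> (\<exists>U\<in>\<U>. E \<subseteq> U)"
    and lt: "ennreal (2 * \<rho>) < ennreal d"
    unfolding lebesgue_number_def less_SUP_iff by auto
  have "ediam (ball s \<rho>) < ennreal d" using ediam_ball_le[OF r(1), of s] lt by (rule le_less_trans)
  thus ?thesis using d(2) by auto
qed

lemma cover_small:
  fixes \<U> :: "'a::metric_space set set"
  assumes "cover_diam \<U> < ennreal T" "U \<in> \<U>" "x \<in> U" "y \<in> U"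
  shows "dist x y < T"
proof -
  have "ennreal (dist x y) \<le> ediam U" unfolding ediam_def
    by (rule SUP_upper2[of "(x,y)"]) (use assms in auto)
  also have "\<dots> \<le> cover_diam \<U>" unfolding cover_diam_def by (rule SUP_upper) (rule assms)
  finally have "ennreal (dist x y) < ennreal T" using assms(1) by (rule le_less_trans)
  thus ?thesis by (subst (asm) ennreal_less_iff) auto
qed

lemma finite_int_between: "finite {n::int. a < real_of_int n \<and> real_of_int n < b}"
proof -
  have "{n::int. a < real_of_int n \<and> real_of_int n < b} \<subseteq> {\<lfloor>a\<rfloor>..\<lceil>b\<rceil>}"
    by (auto simp: floor_le_iff le_ceiling_iff)
  thus ?thesis by (rule finite_subset) auto
qed



lemma G_exists:
  fixes S :: "'a::metric_space set" and C D lam K :: real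
  assumes dense: "UNIV \<subseteq> closure S"
    and C: "C \<ge> 1" and D: "D \<ge> 0" and lam: "lam > 0" and K: "K > 2 * (C + lam)"
    and Delta: "\<forall>R\<ge>0. Delta_c (UNIV :: 'a set) R \<le> ennreal (C * R + D)"
  shows "\<exists>G :: 'a \<Rightarrow> int \<times> 'a \<Rightarrow> real.
     (\<forall>z j. G z j \<ge> 0) \<and> (\<forall>z j. G z j \<noteq> 0 \<longrightarrow> snd j \<in> S) \<and>
     (\<forall>x y j. \<bar>G x j - G y j\<bar> \<le> K * dist x y) \<and>
     (\<forall>z \<eta>. \<eta> > 0 \<longrightarrow> finite {j. G z j > \<eta>}) \<and>
     (\<forall>x y. dist x y > D \<longrightarrow> (\<exists>j. \<bar>G x j - G y j\<bar> \<ge> dist x y - D))"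
proof -
  define m where "m = K / (2 * (C + lam))"
  have CL: "C + lam > 0" using C lam by auto
  have m1: "m > 1" unfolding m_def using K CL by (simp add: field_simps)
  define q where "q = (1 + m) / 2"
  have q1: "q > 1" and qm: "q < m" unfolding q_def using m1 by auto
  define \<theta> where "\<theta> = q / (2 * m)"
  have th0: "\<theta> > 0" and th1: "\<theta> < 1/2" unfolding \<theta>_def using q1 qm m1 by (auto simp: field_simps)
  have Kth: "K * \<theta> = q * (C + lam)" unfolding \<theta>_def m_def using CL K by (simp add: field_simps)
  have "2 * (C + lam) > 2" using C lam by simp
  hence Kpos: "K > 2" using K by linarith
  define c where "c = (C + lam) * (1/2 - 1/K)"
  have hk: "1/2 - 1/K > 0" using Kpos by (simp add: field_simps)
  have c0: "c > 0" unfolding c_def using CL hk by simp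
  define R where "R = (\<lambda>n::int. q powr (real_of_int n))"
  have Rpos: "R n > 0" for n unfolding R_def using q1 by auto
  define \<rho> where "\<rho> = (\<lambda>n. \<theta> * R n)"
  have rho0: "\<rho> n \<ge> 0" "2 * \<rho> n < R n" "\<rho> n < R n" for n
    unfolding \<rho>_def using th0 th1 Rpos[of n] by (auto simp: field_simps)
  have "\<forall>n. \<exists>\<U>::'a set set. point_finite_cover UNIV \<U> \<and> lebesgue_number UNIV \<U> \<ge> ennreal (R n)
           \<and> cover_diam \<U> < ennreal ((C + lam) * R n + D)"
    using cover_exists[OF Delta _ D Rpos lam] C by auto
  then have "\<exists>Cov::int \<Rightarrow> 'a set set. \<forall>n. point_finite_cover UNIV (Cov n) \<and> lebesgue_number UNIV (Cov n) \<ge> ennreal (R n)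
           \<and> cover_diam (Cov n) < ennreal ((C + lam) * R n + D)" by (rule choice)
  then obtain Cov :: "int \<Rightarrow> 'a set set" where CovA: "\<forall>n. point_finite_cover UNIV (Cov n) \<and> lebesgue_number UNIV (Cov n) \<ge> ennreal (R n)
           \<and> cover_diam (Cov n) < ennreal ((C + lam) * R n + D)" by blast
  have Cov: "\<And>n. point_finite_cover UNIV (Cov n)"
    "\<And>n. lebesgue_number UNIV (Cov n) \<ge> ennreal (R n)"
    "\<And>n. cover_diam (Cov n) < ennreal ((C + lam) * R n + D)"
    using CovA by auto
  have Cfin: "finite {U \<in> Cov n. z \<in> U}" for n z using Cov(1)[of n] unfolding point_finite_cover_def by auto
  define Usel where "Usel = (\<lambda>n s. SOME U. U \<in> Cov n \<and> ball s (\<rho> n) \<subseteq> U)"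
  have Usel: "Usel n s \<in> Cov n \<and> ball s (\<rho> n) \<subseteq> Usel n s" for n s
  proof -
    have "\<exists>U. U \<in> Cov n \<and> ball s (\<rho> n) \<subseteq> U" using cover_ball[OF Cov(2) rho0(1) rho0(2)] by blast
    thus ?thesis unfolding Usel_def by (rule someI_ex)
  qed
  define rep where "rep = (\<lambda>n U. SOME s. s \<in> S \<and> Usel n s = U)"
  have rep: "rep n (Usel n s) \<in> S \<and> Usel n (rep n (Usel n s)) = Usel n s" if "s \<in> S" for n s
  proof -
    have "\<exists>s'. s' \<in> S \<and> Usel n s' = Usel n s" using that by blast
    thus ?thesis unfolding rep_def by (rule someI_ex)
  qed
  define phi where "phi = (\<lambda>n U (z::'a). if U = UNIV then R n else min (R n) (infdist z (-U)))"
  define x0 :: 'a where "x0 = undefined"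
  define g where "g = (\<lambda>n U z. K * min (phi n U z) (max 0 (dist z x0 - c * R n)))"
  define G where "G = (\<lambda>z (j::int \<times> 'a). if snd j \<in> S \<and> rep (fst j) (Usel (fst j) (snd j)) = snd j
                        then g (fst j) (Usel (fst j) (snd j)) z else 0)"
  have phi_nn: "phi n U z \<ge> 0" for n U z unfolding phi_def using Rpos[of n] infdist_nonneg by auto
  have phi_le: "phi n U z \<le> R n" for n U z unfolding phi_def by auto
  have phi_lip: "\<bar>phi n U x - phi n U y\<bar> \<le> dist x y" for n U x y
  proof (cases "U = UNIV")
    case False
    have "\<bar>min (R n) (infdist x (-U)) - min (R n) (infdist y (-U))\<bar>
          \<le> max \<bar>R n - R n\<bar> \<bar>infdist x (-U) - infdist y (-U)\<bar>" by (rule min_lip)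
    also have "\<dots> \<le> dist x y" using infdist_triangle_abs[of x "-U" y] by simp
    finally show ?thesis using False unfolding phi_def by simp
  qed (simp add: phi_def)
  have g_nn: "g n U z \<ge> 0" for n U z unfolding g_def using phi_nn Kpos by auto
  have g_lip: "\<bar>g n U x - g n U y\<bar> \<le> K * dist x y" for n U x y
  proof -
    have a: "\<bar>max 0 (dist x x0 - c * R n) - max 0 (dist y x0 - c * R n)\<bar> \<le> dist x y"
      using abs_dist_diff_le[of x x0 y] by (simp add: dist_commute max_def abs_if split: if_splits)
    have "\<bar>min (phi n U x) (max 0 (dist x x0 - c * R n)) - min (phi n U y) (max 0 (dist y x0 - c * R n))\<bar>
        \<le> max \<bar>phi n U x - phi n U y\<bar> \<bar>max 0 (dist x x0 - c * R n) - max 0 (dist y x0 - c * R n)\<bar>"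
      by (rule min_lip)
    also have "\<dots> \<le> dist x y" using a phi_lip[of n U x y] by simp
    finally show ?thesis unfolding g_def using Kpos
      by (simp add: right_diff_distrib[symmetric] abs_mult)
  qed
  have G1: "\<forall>z j. G z j \<ge> 0" unfolding G_def using g_nn by auto
  have G0: "\<forall>z j. G z j \<noteq> 0 \<longrightarrow> snd j \<in> S" unfolding G_def by auto
  have G2: "\<forall>x y j. \<bar>G x j - G y j\<bar> \<le> K * dist x y" unfolding G_def using g_lip Kpos by auto
  have G3: "\<forall>z \<eta>. \<eta> > 0 \<longrightarrow> finite {j. G z j > \<eta>}"
  proof (intro allI impI)
    fix z and \<eta> :: real assume eta: "\<eta> > 0"
    define N where "N = {n. \<eta> / K < R n \<and> c * R n < dist z x0}"
    have sub: "{j. G z j > \<eta>} \<subseteq> (\<Union>n\<in>N. (\<lambda>U. (n, rep n U)) ` {U \<in> Cov n. z \<in> U})"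
    proof
      fix j assume "j \<in> {j. G z j > \<eta>}"
      then obtain n s where j: "j = (n, s)" and gt: "G z (n, s) > \<eta>" by (cases j) auto
      define U where "U = Usel n s"
      have sS: "s \<in> S" and rs: "rep n U = s" and gU: "g n U z > \<eta>"
        using gt eta unfolding G_def U_def by (auto split: if_splits)
      have "g n U z \<le> K * phi n U z" unfolding g_def using Kpos by (simp add: mult_left_mono)
      also have "\<dots> \<le> K * R n" using phi_le Kpos by (simp add: mult_left_mono)
      finally have R1: "\<eta> / K < R n" using gU Kpos by (simp add: field_simps)
      have gpos: "g n U z > 0" using gU eta by linarith
      hence "min (phi n U z) (max 0 (dist z x0 - c * R n)) > 0" unfolding g_def using Kpos
        by (simp add: zero_less_mult_iff)
      hence pp: "phi n U z > 0" and mp: "max 0 (dist z x0 - c * R n) > 0" by auto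
      from mp have R2: "c * R n < dist z x0" by auto
      have zU: "z \<in> U"
      proof (cases "U = UNIV")
        case False
        with pp have "infdist z (-U) > 0" unfolding phi_def by auto
        thus ?thesis by (metis ComplI infdist_zero less_irrefl)
      qed auto
      have "U \<in> Cov n" unfolding U_def using Usel by blast
      thus "j \<in> (\<Union>n\<in>N. (\<lambda>U. (n, rep n U)) ` {U \<in> Cov n. z \<in> U})"
        using R1 R2 zU rs j unfolding N_def by force
    qed
    have "N \<subseteq> {n. log q (\<eta> / K) < real_of_int n \<and> real_of_int n < log q (dist z x0 / c)}"
    proof
      fix n assume "n \<in> N"
      hence n1: "\<eta> / K < R n" and n2: "c * R n < dist z x0" unfolding N_def by auto
      have "log q (\<eta> / K) < log q (R n)" using n1 eta Kpos q1 by (intro log_less) auto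
      moreover have "log q (R n) = n" unfolding R_def using q1 by simp
      moreover have "R n < dist z x0 / c" using n2 c0 by (simp add: field_simps)
      hence "log q (R n) < log q (dist z x0 / c)" using q1 Rpos[of n] by (intro log_less) auto
      ultimately show "n \<in> {n. log q (\<eta> / K) < real_of_int n \<and> real_of_int n < log q (dist z x0 / c)}"
        by auto
    qed
    hence "finite N" using finite_int_between finite_subset by blast
    hence "finite (\<Union>n\<in>N. (\<lambda>U. (n, rep n U)) ` {U \<in> Cov n. z \<in> U})"
      using Cfin by auto
    thus "finite {j. G z j > \<eta>}" using sub finite_subset by blast
  qed
  have key: "\<exists>j. G x j - G y j \<ge> dist x y - D"
    if tD: "dist x y > D" and half: "dist x x0 \<ge> dist x y / 2" for x y
  proof -
    define t where "t = dist x y"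
    define a where "a = (t - D) / (C + lam)"
    have a0: "a > 0" unfolding a_def t_def using tD CL by auto
    define n where "n = \<lfloor>log q a\<rfloor>"
    have Rle: "R n \<le> a"
    proof -
      have "R n \<le> q powr (log q a)" unfolding R_def n_def using q1 by simp
      thus ?thesis using q1 a0 by simp
    qed
    have Rgt: "a < q * R n"
    proof -
      have "log q a < real_of_int n + 1" unfolding n_def by linarith
      hence "q powr (log q a) < q powr (real_of_int n + 1)" using q1 by simp
      also have "\<dots> = q * R n" unfolding R_def using q1 by (simp add: powr_add)
      finally show ?thesis using q1 a0 by simp
    qed
    have tlt: "t - D < K * \<rho> n"
    proof -
      have "t - D = (C + lam) * a" unfolding a_def using CL by simp
      also have "\<dots> < (C + lam) * (q * R n)" using Rgt CL by simp
      also have "\<dots> = K * \<rho> n" unfolding \<rho>_def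
        by (subst mult.assoc[symmetric], subst Kth) (simp add: mult_ac)
      finally show ?thesis .
    qed
    define \<epsilon> where "\<epsilon> = \<rho> n - (t - D) / K"
    have eps0: "\<epsilon> > 0" unfolding \<epsilon>_def using tlt Kpos by (simp add: field_simps)
    have epsr: "\<epsilon> < \<rho> n" unfolding \<epsilon>_def using tD Kpos t_def by simp
    have "x \<in> closure S" using dense by auto
    then obtain s where sS: "s \<in> S" and ds: "dist s x < \<epsilon>"
      using eps0 unfolding closure_approachable by blast
    define U where "U = Usel n s"
    define s' where "s' = rep n U"
    have s'S: "s' \<in> S" and Us': "Usel n s' = U" using rep[OF sS, of n] unfolding U_def s'_def by auto
    have Gxy: "G z (n, s') = g n U z" for z unfolding G_def using s'S Us' s'_def by simp
    have UC: "U \<in> Cov n" and ball: "ball s (\<rho> n) \<subseteq> U" using Usel unfolding U_def by auto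
    have xU: "x \<in> U" using ball ds epsr by auto
    have yU: "y \<notin> U"
    proof
      assume "y \<in> U"
      hence "dist x y < (C + lam) * R n + D" using cover_small[OF Cov(3) UC xU] by blast
      also have "\<dots> \<le> (C + lam) * a + D" using Rle CL by simp
      also have "\<dots> = t" unfolding a_def using CL by simp
      finally show False unfolding t_def by simp
    qed
    hence UU: "U \<noteq> UNIV" by auto
    have "phi n U y = 0" unfolding phi_def using UU yU Rpos[of n] by simp
    hence gy: "g n U y = 0" unfolding g_def by simp
    have ph: "phi n U x = min (R n) (infdist x (-U))" unfolding phi_def using UU by simp
    have "phi n U x \<ge> \<rho> n - dist s x"
      unfolding ph using infdist_ge_ball[OF ball UU, of x] rho0(3)[of n] 
      by (simp add: min_def) (insert zero_le_dist[of s x], linarith)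
    hence A1: "K * phi n U x \<ge> K * (\<rho> n - dist s x)" using Kpos by (intro mult_left_mono) auto
    have A2: "K * (\<rho> n - dist s x) \<ge> K * (\<rho> n - \<epsilon>)" using ds Kpos by (intro mult_left_mono) auto
    have A3: "K * (\<rho> n - \<epsilon>) = t - D" unfolding \<epsilon>_def using Kpos by (simp add: field_simps)
    have A: "K * phi n U x \<ge> t - D" using A1 A2 A3 by linarith
    have ca: "c * a \<le> (1/2 - 1/K) * t"
    proof -
      have "c * a = (1/2 - 1/K) * (t - D)" unfolding c_def a_def using CL by simp
      also have "\<dots> \<le> (1/2 - 1/K) * t" using D Kpos by (intro mult_left_mono) (auto simp: field_simps)
      finally show ?thesis .
    qed
    have "c * R n \<le> c * a" using Rle c0 by simp
    moreover have e1: "(1/2 - 1/K) * t = t/2 - t/K" by (simp add: algebra_simps)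
    ultimately have "dist x x0 - c * R n \<ge> t / K" using half ca t_def by linarith
    hence "K * max 0 (dist x x0 - c * R n) \<ge> K * (t / K)" using Kpos by (intro mult_left_mono) auto
    hence "K * max 0 (dist x x0 - c * R n) \<ge> t" using Kpos by simp
    hence B: "K * max 0 (dist x x0 - c * R n) \<ge> t - D" using D by linarith
    have "g n U x \<ge> t - D" unfolding g_def using A B by (simp add: min_def)
    thus ?thesis using gy Gxy t_def by (intro exI[of _ "(n, s')"]) simp
  qed
  have G4: "\<forall>x y. dist x y > D \<longrightarrow> (\<exists>j. \<bar>G x j - G y j\<bar> \<ge> dist x y - D)"
  proof (intro allI impI)
    fix x y :: 'a assume xy: "dist x y > D"
    show "\<exists>j. \<bar>G x j - G y j\<bar> \<ge> dist x y - D"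
    proof (cases "dist x x0 \<ge> dist x y / 2")
      case True
      then obtain j where "G x j - G y j \<ge> dist x y - D" using key xy by blast
      thus ?thesis by (intro exI[of _ j]) linarith
    next
      case False
      hence "dist y x0 \<ge> dist y x / 2" using dist_triangle[of x y x0] by (simp add: dist_commute)
      then obtain j where "G y j - G x j \<ge> dist y x - D" using key xy by (metis dist_commute)
      thus ?thesis by (intro exI[of _ j]) (simp add: dist_commute)
    qed
  qed
  show ?thesis using G1 G0 G2 G3 G4 by blast
qed



lemma transfer:
  fixes G :: "'a::metric_space \<Rightarrow> int \<times> 'a \<Rightarrow> real" and e :: "int \<times> 'a \<Rightarrow> 'i"
    and S :: "'a set" and K D :: real
  assumes inj: "inj_on e (UNIV \<times> S)" and K0: "K \<ge> 0"
    and G1: "\<forall>z j. G z j \<ge> 0" and G0: "\<forall>z j. G z j \<noteq> 0 \<longrightarrow> snd j \<in> S"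
    and G2: "\<forall>x y j. \<bar>G x j - G y j\<bar> \<le> K * dist x y"
    and G3: "\<forall>z \<eta>. \<eta> > 0 \<longrightarrow> finite {j. G z j > \<eta>}"
    and G4: "\<forall>x y. dist x y > D \<longrightarrow> (\<exists>j. \<bar>G x j - G y j\<bar> \<ge> dist x y - D)"
  shows "\<exists>f :: 'a \<Rightarrow> 'i \<Rightarrow> real. (\<forall>x. f x \<in> c0plus) \<and>
     (\<forall>x y. dist x y - D \<le> sup_dist (f x) (f y) \<and> sup_dist (f x) (f y) \<le> K * dist x y)"
proof -
  define T where "T = (UNIV :: int set) \<times> S"
  define f where "f = (\<lambda>x i. if i \<in> e ` T then G x (inv_into T e i) else 0)"
  have bnd: "\<bar>f x i - f y i\<bar> \<le> K * dist x y" for x y i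
  proof -
    have "\<bar>G x j - G y j\<bar> \<le> K * dist x y" for j using G2 by blast
    thus ?thesis unfolding f_def using K0 by simp
  qed
  have G1': "\<And>z j. 0 \<le> G z j" using G1 by blast
  have nn: "f x i \<ge> 0" for x i unfolding f_def using G1' by simp
  have c0p: "f x \<in> c0plus" for x
    unfolding c0plus_def c0_def
  proof (intro CollectI conjI allI impI)
    fix \<eta> :: real assume eta: "\<eta> > 0"
    have "{i. \<bar>f x i\<bar> > \<eta>} \<subseteq> e ` {j. G x j > \<eta>}"
    proof
      fix i assume "i \<in> {i. \<bar>f x i\<bar> > \<eta>}"
      hence i: "\<bar>f x i\<bar> > \<eta>" by auto
      hence iT: "i \<in> e ` T" unfolding f_def using eta by (auto split: if_splits)
      hence "G x (inv_into T e i) > \<eta>" using i G1' unfolding f_def by simp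
      moreover have "i = e (inv_into T e i)" using iT by (simp add: f_inv_into_f)
      ultimately show "i \<in> e ` {j. G x j > \<eta>}" by blast
    qed
    thus "finite {i. \<bar>f x i\<bar> > \<eta>}" using G3 eta finite_subset by blast
  qed (rule nn)
  have low: "dist x y - D \<le> sup_dist (f x) (f y)" for x y
  proof (cases "dist x y > D")
    case False
    moreover have "0 \<le> sup_dist (f x) (f y)" by (rule sup_dist_nonneg) (rule bnd)
    ultimately show ?thesis by linarith
  next
    case True
    then obtain j where j: "\<bar>G x j - G y j\<bar> \<ge> dist x y - D" using G4 by blast
    hence "G x j \<noteq> 0 \<or> G y j \<noteq> 0" using True by auto
    hence jT: "j \<in> T" unfolding T_def using G0 by (cases j) auto
    have inv: "inv_into T e (e j) = j" using inj jT unfolding T_def by (simp add: inv_into_f_f)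
    have "\<bar>f x (e j) - f y (e j)\<bar> = \<bar>G x j - G y j\<bar>" unfolding f_def using jT inv by auto
    moreover have "\<bar>f x (e j) - f y (e j)\<bar> \<le> sup_dist (f x) (f y)" by (rule sup_dist_ge) (rule bnd)
    ultimately show ?thesis using j by linarith
  qed
  have "sup_dist (f x) (f y) \<le> K * dist x y" for x y by (rule sup_dist_le) (rule bnd)
  thus ?thesis using c0p low by blast
qed

lemma frechet:
  fixes h :: "'a::metric_space \<Rightarrow> 'i" and K D :: real
  assumes bij: "bij h" and fin: "finite (UNIV :: 'a set)" and K: "K \<ge> 1" and D: "D \<ge> 0"
  shows "\<exists>f :: 'a \<Rightarrow> 'i \<Rightarrow> real. (\<forall>x. f x \<in> c0plus) \<and>
     (\<forall>x y. dist x y - D \<le> sup_dist (f x) (f y) \<and> sup_dist (f x) (f y) \<le> K * dist x y)"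
proof -
  define f where "f = (\<lambda>x i. dist x (inv h i))"
  have finI: "finite (UNIV :: 'i set)" using bij fin bij_betw_finite by blast
  have bnd: "\<bar>f x i - f y i\<bar> \<le> dist x y" for x y i
    unfolding f_def using abs_dist_diff_le[of x "inv h i" y] by (simp add: dist_commute)
  have c0p: "f x \<in> c0plus" for x
    unfolding c0plus_def c0_def f_def using finI by (auto intro: finite_subset)
  have up: "sup_dist (f x) (f y) \<le> dist x y" for x y by (rule sup_dist_le) (rule bnd)
  have lo: "dist x y \<le> sup_dist (f x) (f y)" for x y
  proof -
    have "inv h (h y) = y" using bij by (simp add: bij_is_inj)
    hence "\<bar>f x (h y) - f y (h y)\<bar> = dist x y" unfolding f_def by simp
    moreover have "\<bar>f x (h y) - f y (h y)\<bar> \<le> sup_dist (f x) (f y)" by (rule sup_dist_ge) (rule bnd)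
    ultimately show ?thesis by linarith
  qed
  have Kd: "dist x y \<le> K * dist x y" for x y :: 'a using K by (simp add: mult_le_cancel_right1)
  show ?thesis
  proof (intro exI[of _ f] conjI allI)
    fix x y :: 'a
    show "dist x y - D \<le> sup_dist (f x) (f y)" using lo[of x y] D by linarith
    show "sup_dist (f x) (f y) \<le> K * dist x y" using up[of x y] Kd[of x y] by linarith
  qed (rule c0p)
qed



lemma master:
  fixes C D lam K :: real
  assumes dens: "has_density_card (UNIV :: 'a::metric_space set) (UNIV :: 'i set)"
    and C: "C \<ge> 1" and D: "D \<ge> 0" and lam: "lam > 0" and K: "K > 2 * (C + lam)"
    and Delta: "\<forall>R\<ge>0. Delta_c (UNIV :: 'a set) R \<le> ennreal (C * R + D)"
  shows "\<exists>f :: 'a \<Rightarrow> 'i \<Rightarrow> real. (\<forall>x. f x \<in> c0plus) \<and>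
     (\<forall>x y. dist x y - D \<le> sup_dist (f x) (f y) \<and> sup_dist (f x) (f y) \<le> K * dist x y)"
proof -
  from dens obtain S :: "'a set" where S: "UNIV \<subseteq> closure S" "ordIso2 (card_of S) (card_of (UNIV :: 'i set))"
    unfolding has_density_card_def by blast
  then obtain h where h: "bij_betw h S (UNIV :: 'i set)" using card_of_ordIso by blast
  have "2 * (C + lam) > 2" using C lam by simp
  hence K1: "K \<ge> 1" using K by linarith
  show ?thesis
  proof (cases "finite S")
    case True
    hence "closure S = S" by (simp add: closure_closed finite_imp_closed)
    hence SU: "S = UNIV" using S(1) by auto
    show ?thesis using frechet[of h K D] h SU True K1 D by auto
  next
    case False
    obtain g :: "nat \<Rightarrow> 'a" where g: "inj g" "range g \<subseteq> S"
      using infinite_countable_subset[OF False] by blast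
    have "ordIso2 (card_of (S \<times> S)) (card_of S)" using card_of_Times_same_infinite[OF False] .
    then obtain p where p: "bij_betw p (S \<times> S) S" using card_of_ordIso by blast
    define e where "e = (\<lambda>j :: int \<times> 'a. h (p (g (to_nat (fst j)), snd j)))"
    have inj: "inj_on e (UNIV \<times> S)"
    proof (rule inj_onI)
      fix a b assume a: "a \<in> UNIV \<times> S" and b: "b \<in> UNIV \<times> S" and eq: "e a = e b"
      have ia: "(g (to_nat (fst a)), snd a) \<in> S \<times> S" using a g(2) by auto
      have ib: "(g (to_nat (fst b)), snd b) \<in> S \<times> S" using b g(2) by auto
      have pa: "p (g (to_nat (fst a)), snd a) \<in> S" by (rule bij_betw_apply[OF p ia])
      have pb: "p (g (to_nat (fst b)), snd b) \<in> S" by (rule bij_betw_apply[OF p ib])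
      have "p (g (to_nat (fst a)), snd a) = p (g (to_nat (fst b)), snd b)"
        using eq pa pb bij_betw_imp_inj_on[OF h] unfolding e_def inj_on_def by blast
      hence "(g (to_nat (fst a)), snd a) = (g (to_nat (fst b)), snd b)"
        using ia ib bij_betw_imp_inj_on[OF p] unfolding inj_on_def by blast
      hence "to_nat (fst a) = to_nat (fst b)" "snd a = snd b" using g(1) by (auto dest: injD)
      hence "fst a = fst b" "snd a = snd b" by (auto dest: injD[OF inj_to_nat])
      thus "a = b" by (simp add: prod_eq_iff)
    qed
    obtain G :: "'a \<Rightarrow> int \<times> 'a \<Rightarrow> real" where
      G1: "\<forall>z j. G z j \<ge> 0" and G0: "\<forall>z j. G z j \<noteq> 0 \<longrightarrow> snd j \<in> S"
      and G2: "\<forall>x y j. \<bar>G x j - G y j\<bar> \<le> K * dist x y"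
      and G3: "\<forall>z \<eta>. \<eta> > 0 \<longrightarrow> finite {j. G z j > \<eta>}"
      and G4: "\<forall>x y. dist x y > D \<longrightarrow> (\<exists>j. \<bar>G x j - G y j\<bar> \<ge> dist x y - D)"
      using G_exists[OF S(1) C D lam K Delta] by blast
    show ?thesis using transfer[OF inj _ G1 G0 G2 G3 G4] K1 by simp
  qed
qed

theorem mainTheorem1:
  fixes C D :: real
  assumes dens: "has_density_card (UNIV :: 'a::metric_space set) (UNIV :: 'i set)"
    and C: "C \<ge> 1" and D: "D \<ge> 0"
    and Delta: "\<forall>R\<ge>0. Delta_c (UNIV :: 'a set) R \<le> ennreal (C * R + D)"
  shows "(\<forall>lam K L. lam > 0 \<and> K > 2 * (C + lam) \<and> L > (C + lam) * D / lam \<longrightarrow>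
            (\<exists>f :: 'a \<Rightarrow> ('i \<Rightarrow> real).
               (\<forall>x. f x \<in> c0plus) \<and> coarse_lipschitz_embedding f sup_dist \<and>
               (\<forall>x y. dist x y - L \<le> sup_dist (f x) (f y) \<and> sup_dist (f x) (f y) \<le> K * dist x y)))
       \<and> (D = 0 \<longrightarrow>
          (\<forall>lam K. lam > 0 \<and> K > 2 * (C + lam) \<longrightarrow>
            (\<exists>f :: 'a \<Rightarrow> ('i \<Rightarrow> real).
               (\<forall>x. f x \<in> c0plus) \<and> coarse_lipschitz_embedding f sup_dist \<and>
               (\<forall>x y. dist x y \<le> sup_dist (f x) (f y) \<and> sup_dist (f x) (f y) \<le> K * dist x y))))"
proof (intro conjI allI impI)
  fix lam K L :: real
  assume a: "lam > 0 \<and> K > 2 * (C + lam) \<and> L > (C + lam) * D / lam"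
  hence lam: "lam > 0" and K: "K > 2 * (C + lam)" and L: "L > (C + lam) * D / lam" by auto
  have "(C + lam) * D / lam = D + C * D / lam" using lam by (simp add: field_simps)
  moreover have "C * D / lam \<ge> 0" using C D lam by simp
  ultimately have LD: "L \<ge> D" using L by linarith
  have "2 * (C + lam) > 2" using C lam by simp
  hence K1: "K \<ge> 1" using K by linarith
  obtain f :: "'a \<Rightarrow> 'i \<Rightarrow> real" where f: "\<forall>x. f x \<in> c0plus"
    "\<forall>x y. dist x y - D \<le> sup_dist (f x) (f y) \<and> sup_dist (f x) (f y) \<le> K * dist x y"
    using master[OF dens C D lam K Delta] by blast
  have b: "\<forall>x y. dist x y - L \<le> sup_dist (f x) (f y) \<and> sup_dist (f x) (f y) \<le> K * dist x y"
    using f(2) LD by (smt (verit))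
  have L0: "L \<ge> 0" using LD D by linarith
  have "coarse_lipschitz_embedding f sup_dist" using cle_from_bounds[where f=f and dY=sup_dist, OF K1 L0 b] .
  thus "\<exists>f :: 'a \<Rightarrow> ('i \<Rightarrow> real).
               (\<forall>x. f x \<in> c0plus) \<and> coarse_lipschitz_embedding f sup_dist \<and>
               (\<forall>x y. dist x y - L \<le> sup_dist (f x) (f y) \<and> sup_dist (f x) (f y) \<le> K * dist x y)"
    using f(1) b by blast
next
  fix lam K :: real
  assume D0: "D = 0" and a: "lam > 0 \<and> K > 2 * (C + lam)"
  hence lam: "lam > 0" and K: "K > 2 * (C + lam)" by auto
  have "2 * (C + lam) > 2" using C lam by simp
  hence K1: "K \<ge> 1" using K by linarith
  obtain f :: "'a \<Rightarrow> 'i \<Rightarrow> real" where f: "\<forall>x. f x \<in> c0plus"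
    "\<forall>x y. dist x y - D \<le> sup_dist (f x) (f y) \<and> sup_dist (f x) (f y) \<le> K * dist x y"
    using master[OF dens C D lam K Delta] by blast
  have b: "\<forall>x y. dist x y - 0 \<le> sup_dist (f x) (f y) \<and> sup_dist (f x) (f y) \<le> K * dist x y"
    using f(2) D0 by simp
  have L0: "(0::real) \<ge> 0" by simp
  have "coarse_lipschitz_embedding f sup_dist" using cle_from_bounds[where f=f and dY=sup_dist, OF K1 L0 b] .
  thus "\<exists>f :: 'a \<Rightarrow> ('i \<Rightarrow> real).
               (\<forall>x. f x \<in> c0plus) \<and> coarse_lipschitz_embedding f sup_dist \<and>
               (\<forall>x y. dist x y \<le> sup_dist (f x) (f y) \<and> sup_dist (f x) (f y) \<le> K * dist x y)"
    using f(1) b by auto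
qed


end
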